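(* Let $\ell>1$ and $4m_c^2\ge(3\ell-1)^2$. Then there is a constant $C$ such that $$\int_0^{\phi(t)-\phi(b)}|E(r,t;b)|\,dr\le C|\phi(b)|^{\frac{1}{1-\ell}}\Big(1+\ln\frac{\phi(b)}{\phi(t)}\Big)^{1-\operatorname{sgn}M}$$ for all $t\in[1,\infty)$ and $1\le b\le t$.
   Context: $\phi(t)=\frac{t^{1-\ell}}{1-\ell}$ (so $\phi<0$ and $\phi(t)-\phi(b)>0$ for $1\le b<t$). $M=\frac{\sqrt{4m_c^2-(1-3\ell)^2}}{2(\ell-1)}\ge0$, $a:=\frac12+iM$, and $\operatorname{sgn}M\in\{0,1\}$ is $1$ iff $M>0$. The kernel is $$E(r,t;b)=2^{2a}(1-\ell)^{\frac{\ell}{1-\ell}}\phi(b)^{\frac{\ell}{1-\ell}+2a}\big((\phi(t)+\phi(b))^2-r^2\big)^{-a}F\Big(a,a;1;\frac{(\phi(t)-\phi(b))^2-r^2}{(\phi(t)+\phi(b))^2-r^2}\Big),$$ with $F$ Gauss's hypergeometric function and complex powers taken with the principal branch. *)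

theory Defs
  imports "HOL-Analysis.Analysis"
begin

definition phi :: "real \<Rightarrow> real \<Rightarrow> real" where
  "phi l t = t powr (1 - l) / (1 - l)"

definition Mpar :: "real \<Rightarrow> real \<Rightarrow> real" where
  "Mpar l mc = sqrt (4 * mc\<^sup>2 - (1 - 3 * l)\<^sup>2) / (2 * (l - 1))"

definition apar :: "real \<Rightarrow> real \<Rightarrow> complex" where
  "apar l mc = 1/2 + \<i> * complex_of_real (Mpar l mc)"

text \<open>Gauss hypergeometric function F(a,b;c;z) as its power series
  (used only for |z| < 1).\<close>
definition hyp2F1 :: "complex \<Rightarrow> complex \<Rightarrow> complex \<Rightarrow> complex \<Rightarrow> complex" where
  "hyp2F1 a b c z =
     (\<Sum>n. pochhammer a n * pochhammer b n / (pochhammer c n * of_nat (fact n)) * z ^ n)"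

text \<open>The kernel E(r,t;b); complex powers use the principal branch (powr on complex).\<close>
definition Ekernel :: "real \<Rightarrow> real \<Rightarrow> real \<Rightarrow> real \<Rightarrow> real \<Rightarrow> complex" where
  "Ekernel l mc r t b =
     (let a = apar l mc; pt = phi l t; pb = phi l b in
      2 powr (2 * a)
      * complex_of_real (1 - l) powr complex_of_real (l / (1 - l))
      * complex_of_real pb powr (complex_of_real (l / (1 - l)) + 2 * a)
      * complex_of_real ((pt + pb)\<^sup>2 - r\<^sup>2) powr (- a)
      * hyp2F1 a a 1 (complex_of_real (((pt - pb)\<^sup>2 - r\<^sup>2) / ((pt + pb)\<^sup>2 - r\<^sup>2))))"

end

theory Submission
  imports Defs
begin

definition cc :: "real \<Rightarrow> nat \<Rightarrow> complex" where
  "cc M n = pochhammer (1/2 + \<i> * complex_of_real M) n ^ 2 / (of_nat (fact n))^2"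

lemma cc_Suc: "cc M (Suc n) = cc M n * (1/2 + \<i> * complex_of_real M + of_nat n)^2 / (of_nat (Suc n))^2"
proof -
  define a where "a = 1/2 + \<i> * complex_of_real M"
  have "cc M (Suc n) = ((a + of_nat n)^2 * pochhammer a n ^ 2) / ((of_nat (Suc n))^2 * (of_nat (fact n))^2)"
    unfolding cc_def a_def[symmetric] pochhammer_rec' fact_Suc of_nat_mult power_mult_distrib by simp
  also have "\<dots> = (pochhammer a n ^ 2 / (of_nat (fact n))^2) * ((a + of_nat n)^2 / (of_nat (Suc n))^2)"
    by (simp add: field_simps)
  finally show ?thesis by (simp add: cc_def a_def)
qed

lemma norm_cc_Suc: "norm (cc M (Suc n)) = norm (cc M n) * ((real n + 1/2)^2 + M^2) / (real n + 1)^2"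
proof -
  have e: "1/2 + \<i> * complex_of_real M + of_nat n = Complex (real n + 1/2) M"
    by (simp add: complex_eq_iff)
  have "norm ((1/2 + \<i> * complex_of_real M + of_nat n)^2) = (real n + 1/2)^2 + M^2"
    unfolding e norm_power cmod_power2 by simp
  moreover have "norm (cc M (Suc n)) = norm (cc M n) * norm ((1/2 + \<i> * complex_of_real M + of_nat n)^2) / (real n + 1)^2"
    unfolding cc_Suc norm_divide norm_mult norm_power[of "of_nat (Suc n)"] norm_of_nat by simp
  ultimately show ?thesis by simp
qed

lemma poly_ineq:
  fixes x M :: real assumes "x \<ge> 0"
  shows "((x + 1/2)^2 + M^2) * (x+2)^2 \<le> (x+1)^2 * ((x+1)*(x+2) + 4*M^2)"
proof -
  have "M^2 * (x+2)^2 \<le> M^2 * (4*(x+1)^2)"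
    by (rule mult_left_mono) (use assms in \<open>auto simp: power2_eq_square algebra_simps\<close>)
  moreover have "(x + 1/2)^2 * (x+2)^2 \<le> (x+1)^3*(x+2)"
    using assms by (simp add: power2_eq_square power3_eq_cube algebra_simps)
  ultimately show ?thesis by (simp add: power2_eq_square power3_eq_cube algebra_simps)
qed

lemma norm_cc_bound_aux:
  "norm (cc M n) \<le> exp (4*M^2 - 4*M^2/(real n+1)) / (real n + 1)"
proof (induction n)
  case 0 then show ?case by (simp add: cc_def)
next
  case (Suc n)
  define x where "x = real n"
  define \<beta> where "\<beta> = 4*M^2"
  define E where "E = exp (\<beta> - \<beta>/(x+1))"
  have x0: "x \<ge> 0" by (simp add: x_def)
  have E0: "E > 0" by (simp add: E_def)
  have q0: "((x + 1/2)^2 + M^2) / (x + 1)^2 \<ge> 0" by simp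
  have IH: "norm (cc M n) \<le> E / (x+1)" using Suc.IH by (simp add: E_def x_def \<beta>_def)
  have "norm (cc M (Suc n)) = norm (cc M n) * (((x + 1/2)^2 + M^2) / (x + 1)^2)"
    by (simp add: norm_cc_Suc x_def)
  also have "\<dots> \<le> E / (x+1) * (((x + 1/2)^2 + M^2) / (x + 1)^2)"
    by (rule mult_right_mono[OF IH q0])
  also have "\<dots> \<le> E * (1 + \<beta>/((x+1)*(x+2))) / (x+2)"
  proof -
    have p1: "(x+1)^3 > 0" "(x+1)*(x+2)^2 > 0" "(x+1)*(x+2) > 0" using x0 by auto
    have m: "((x + 1/2)^2 + M^2) * ((x+1)*(x+2)^2) \<le> ((x+1)*(x+2)+\<beta>) * (x+1)^3"
      using mult_right_mono[OF poly_ineq[OF x0, of M], of "x+1"] x0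
      by (simp add: \<beta>_def power2_eq_square power3_eq_cube algebra_simps)
    have "((x + 1/2)^2 + M^2) / (x+1)^3 \<le> ((x+1)*(x+2)+\<beta>) / ((x+1)*(x+2)^2)"
      using m p1 by (simp add: divide_simps)
    also have "\<dots> = (1 + \<beta>/((x+1)*(x+2))) / (x+2)"
      using p1 by (simp add: field_simps power2_eq_square)
    finally have "((x + 1/2)^2 + M^2) / (x+1)^3 \<le> (1 + \<beta>/((x+1)*(x+2))) / (x+2)" .
    then have "E * (((x + 1/2)^2 + M^2) / (x+1)^3) \<le> E * ((1 + \<beta>/((x+1)*(x+2))) / (x+2))"
      using E0 by (intro mult_left_mono) auto
    moreover have "E / (x+1) * (((x + 1/2)^2 + M^2) / (x + 1)^2) = E * (((x + 1/2)^2 + M^2) / (x+1)^3)"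
      by (simp add: power2_eq_square power3_eq_cube)
    ultimately show ?thesis by (metis times_divide_eq_right)
  qed
  also have "\<dots> \<le> E * exp (\<beta>/((x+1)*(x+2))) / (x+2)"
    using E0 x0 by (intro divide_right_mono mult_left_mono) (auto simp: exp_ge_add_one_self add.commute)
  also have "E * exp (\<beta>/((x+1)*(x+2))) = exp (\<beta> - \<beta>/(x+2))"
  proof -
    have h: "x+1 > 0" "x+2>0" using x0 by auto
    have "\<beta> - \<beta>/(x+1) + \<beta>/((x+1)*(x+2)) = \<beta> - \<beta>/(x+2)"
      using h by (simp add: divide_simps) (simp add: algebra_simps)
    then show ?thesis by (simp add: E_def exp_add[symmetric])
  qed
  finally show ?case by (simp add: x_def \<beta>_def add.commute)
qed

lemma norm_cc_bound: "norm (cc M n) \<le> exp (4*M^2) / (real n + 1)"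
proof -
  have "exp (4*M^2 - 4*M^2/(real n+1)) \<le> exp (4*M^2)" by simp
  then show ?thesis using norm_cc_bound_aux[of M n]
    by (smt (verit) divide_right_mono of_nat_0_le_iff)
qed

lemma norm_cc_le: "norm (cc M n) \<le> exp (4*M^2)"
proof -
  have "exp (4*M^2) / (real n + 1) \<le> exp (4*M^2)"
    by (simp add: divide_le_eq)
  then show ?thesis using norm_cc_bound[of M n] by linarith
qed

lemma hyp_eq: "hyp2F1 (1/2 + \<i> * complex_of_real M) (1/2 + \<i> * complex_of_real M) 1 w = (\<Sum>n. cc M n * w ^ n)"
proof -
  have p: "pochhammer (1::complex) n = of_nat (fact n)" for n
    by (metis of_nat_fact pochhammer_fact)
  show ?thesis unfolding hyp2F1_def cc_def p by (simp add: power2_eq_square)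
qed

lemma summable_cc:
  assumes "0 \<le> z" "z < 1"
  shows "summable (\<lambda>n. norm (cc M n * complex_of_real z ^ n))"
proof (rule summable_comparison_test[of _ "\<lambda>n. exp (4*M^2) * z^n"])
  show "summable (\<lambda>n. exp (4*M^2) * z^n)" using assms by (intro summable_mult summable_geometric) auto
  show "\<exists>N. \<forall>n\<ge>N. norm (norm (cc M n * complex_of_real z ^ n)) \<le> exp (4*M^2) * z^n"
  proof (intro exI allI impI)
    fix n :: nat
    have "norm (cc M n) \<le> exp (4*M^2)"
      by (rule norm_cc_le)
    moreover have "norm (norm (cc M n * complex_of_real z ^ n)) = norm (cc M n) * z^n"
      using assms by (simp add: norm_mult norm_power)
    ultimately show "norm (norm (cc M n * complex_of_real z ^ n)) \<le> exp (4*M^2) * z^n"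
      using assms by (simp add: mult_right_mono)
  qed
qed

lemma ln_bound_series:
  assumes "0 \<le> z" "z < 1"
  shows "(\<lambda>n. z^(Suc n) / real (Suc n)) sums (- ln (1 - z))"
proof -
  have S1: "(\<lambda>n. (-1)^n * (1 / real (n + 1)) * ((1-z) - 1)^(Suc n)) sums ln (1 - z)"
  proof -
    have s: "summable (\<lambda>n. (-1)^n * (1 / real (n + 1)) * ((1-z) - 1)^(Suc n))"
    proof (rule summable_comparison_test[of _ "\<lambda>n. z^n"])
      show "summable (\<lambda>n. z^n)" using assms by (intro summable_geometric) auto
      show "\<exists>N. \<forall>n\<ge>N. norm ((-1)^n * (1 / real (n + 1)) * ((1-z) - 1)^(Suc n)) \<le> z^n"
      proof (intro exI allI impI)
        fix n :: nat
        have a: "z^(Suc n) \<le> z^n" using assms by (simp add: mult_left_le_one_le)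
        have "z^(Suc n) * 1 \<le> z^(Suc n) * real (n + 1)" using assms by (intro mult_left_mono) auto
        then have "z^(Suc n) / real (n+1) \<le> z^(Suc n)" by (simp add: divide_le_eq)
        with a have "z^(Suc n) / real (n+1) \<le> z^n" by linarith
        then show "norm ((-1)^n * (1 / real (n + 1)) * ((1-z) - 1)^(Suc n)) \<le> z^n"
          using assms by (simp add: norm_mult norm_power abs_mult power_abs)
      qed
    qed
    show ?thesis using ln_series[of "1-z"] assms s by (simp add: sums_iff)
  qed
  have EQ: "(-1)^n * (1 / real (n + 1)) * ((1-z) - 1)^(Suc n) = - (z^(Suc n) / real (Suc n))" for n
    by (simp add: power_minus[of z])
  have "(\<lambda>n. (-1)^n * (1 / real (n + 1)) * ((1-z) - 1)^(Suc n)) = (\<lambda>n. - (z^(Suc n) / real (Suc n)))"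
    by (intro ext) (rule EQ)
  with S1 have "(\<lambda>n. - (z^(Suc n) / real (Suc n))) sums ln (1 - z)" by simp
  then have "(\<lambda>n. - (- (z^(Suc n) / real (Suc n)))) sums - ln (1 - z)" by (rule sums_minus)
  then show ?thesis by simp
qed

lemma F_log_bound:
  assumes "0 \<le> z" "z < 1"
  shows "norm (hyp2F1 (1/2 + \<i> * complex_of_real M) (1/2 + \<i> * complex_of_real M) 1 (complex_of_real z))
          \<le> exp (4*M^2) * (1 - ln (1 - z))"
proof -
  define K where "K = exp (4*M^2)"
  have s1: "summable (\<lambda>n. norm (cc M n * complex_of_real z ^ n))" using summable_cc[OF assms] .
  have g: "(\<lambda>n. z^n) sums (1/(1-z))" using assms geometric_sums[of z] by simp
  have s2: "(\<lambda>n. K * (z^(Suc n) / real (Suc n)) + K * (1-z) * z^n) sums (K * (- ln (1 - z)) + K * (1-z) * (1/(1-z)))"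
    by (intro sums_add sums_mult ln_bound_series[OF assms] g)
  have "norm (\<Sum>n. cc M n * complex_of_real z ^ n) \<le> (\<Sum>n. norm (cc M n * complex_of_real z ^ n))"
    by (rule summable_norm[OF s1])
  also have "\<dots> \<le> (\<Sum>n. K * (z^(Suc n) / real (Suc n)) + K * (1-z) * z^n)"
  proof (rule suminf_le[OF _ s1 sums_summable[OF s2]])
    fix n
    have "norm (cc M n * complex_of_real z ^ n) = norm (cc M n) * z^n"
      using assms by (simp add: norm_mult norm_power)
    also have "\<dots> \<le> K / (real n + 1) * z^n"
      using mult_right_mono[OF norm_cc_bound[of M n], of "z^n"] assms by (simp add: K_def)
    finally have "norm (cc M n * complex_of_real z ^ n) \<le> K / (real n + 1) * z^n" .
    also have "\<dots> \<le> K * (z^(Suc n) / real (Suc n)) + K * (1-z) * z^n"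
    proof -
      have e1: "z^(Suc n) / real (Suc n) + (1-z) * z^n / (real n + 1) = (z^(Suc n) + (1-z) * z^n) / (real n + 1)"
        by (simp add: add_divide_distrib add.commute)
      have e2: "z^(Suc n) + (1-z) * z^n = z^n" by (simp add: algebra_simps)
      have "z^n / (real n + 1) = z^(Suc n) / real (Suc n) + (1-z) * z^n / (real n + 1)"
        unfolding e1 e2 ..
      also have "\<dots> \<le> z^(Suc n) / real (Suc n) + (1-z) * z^n"
      proof -
        have "(1-z) * z^n * 1 \<le> (1-z) * z^n * (real n + 1)" using assms by (intro mult_left_mono) auto
        then have "(1-z) * z^n / (real n + 1) \<le> (1-z) * z^n" by (simp add: divide_le_eq)
        then show ?thesis by linarith
      qed
      finally have "z^n / (real n + 1) \<le> z^(Suc n) / real (Suc n) + (1-z) * z^n" .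
      then have "K * (z^n / (real n + 1)) \<le> K * (z^(Suc n) / real (Suc n) + (1-z) * z^n)"
        by (rule mult_left_mono) (simp add: K_def)
      then show ?thesis by (simp add: algebra_simps)
    qed
    finally show "norm (cc M n * complex_of_real z ^ n) \<le> K * (z^(Suc n) / real (Suc n)) + K * (1-z) * z^n" .
  qed
  also have "\<dots> = K * (- ln (1 - z)) + K * (1-z) * (1/(1-z))"
    by (rule sums_unique[OF s2, symmetric])
  also have "\<dots> = K * (1 - ln (1 - z))"
  proof -
    have "(1-z) * (1/(1-z)) = 1" using assms by simp
    then have "K * (1-z) * (1/(1-z)) = K" by (metis mult.assoc mult_1_right)
    then show ?thesis by (simp add: algebra_simps)
  qed
  finally show ?thesis by (simp add: hyp_eq K_def)
qed

lemma cc_identity: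
  "(2 * (1/2 + \<i> * complex_of_real M) - 1) * cc M n =
     of_nat (Suc n) * cc M (Suc n) - of_nat n * cc M n
     - ((1/2 + \<i> * complex_of_real M) - 1)^2 * (cc M n / of_nat (Suc n))"
proof -
  define a where "a = 1/2 + \<i> * complex_of_real M"
  have n0: "(of_nat (Suc n) :: complex) \<noteq> 0" by (simp del: of_nat_Suc)
  have "of_nat (Suc n) * cc M (Suc n) = cc M n * (a + of_nat n)^2 / of_nat (Suc n)"
    unfolding cc_Suc a_def[symmetric] using n0 by (simp add: power2_eq_square field_simps del: of_nat_Suc)
  moreover have "(2 * a - 1) * of_nat (Suc n) = (a + of_nat n)^2 - of_nat n * of_nat (Suc n) - (a - 1)^2"
    by (simp add: power2_eq_square algebra_simps)
  ultimately show ?thesis unfolding a_def[symmetric] using n0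
    by (simp add: field_simps del: of_nat_Suc) (simp add: algebra_simps power2_eq_square)
qed

lemma summable_inv_sq: "summable (\<lambda>n. inverse (real (Suc n) ^ 2))"
  using inverse_power_summable[of 2, where 'a=real] summable_Suc_iff[of "\<lambda>n. inverse (real n ^ 2)"]
  by simp

lemma F_bdd:
  assumes "0 \<le> z" "z < 1" "M > 0"
  shows "norm (hyp2F1 (1/2 + \<i> * complex_of_real M) (1/2 + \<i> * complex_of_real M) 1 (complex_of_real z))
          \<le> (exp (4*M^2) + norm ((1/2 + \<i> * complex_of_real M) - 1)^2 * (\<Sum>n. exp (4*M^2) * inverse (real (Suc n) ^ 2))) / (2*M)"
proof -
  define K where "K = exp (4*M^2)"
  define a where "a = 1/2 + \<i> * complex_of_real M"
  define w where "w = complex_of_real z"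
  define C2 where "C2 = (\<Sum>n. K * inverse (real (Suc n) ^ 2))"
  define u where "u n = of_nat (Suc n) * cc M (Suc n)" for n
  have K0: "K > 0" by (simp add: K_def)
  have nw: "norm w = z" using assms by (simp add: w_def)
  have cn: "norm (cc M n) \<le> K / (real n + 1)" for n using norm_cc_bound[of M n] by (simp add: K_def)
  have un: "norm (u n) \<le> K" for n
  proof -
    have "norm (u n) = real (Suc n) * norm (cc M (Suc n))" by (simp add: u_def norm_mult del: of_nat_Suc)
    also have "\<dots> \<le> real (Suc n) * (K / (real (Suc n) + 1))"
      by (intro mult_left_mono cn) auto
    also have "\<dots> \<le> K" using K0 by (simp add: field_simps)
    finally show ?thesis .
  qed
  have vn: "norm (of_nat n * cc M n) \<le> K" for n
  proof -
    have "norm (of_nat n * cc M n) = real n * norm (cc M n)" by (simp add: norm_mult)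
    also have "\<dots> \<le> real n * (K / (real n + 1))"
      by (intro mult_left_mono cn) auto
    also have "\<dots> \<le> K" using K0 by (simp add: field_simps)
    finally show ?thesis .
  qed
  have hn: "norm (cc M n * w^n / of_nat (Suc n)) \<le> K * inverse (real (Suc n) ^ 2)" for n
  proof -
    have "norm (cc M n * w^n / of_nat (Suc n)) = norm (cc M n) * z^n / real (Suc n)"
      by (simp add: norm_mult norm_divide norm_power nw del: of_nat_Suc)
    also have "\<dots> \<le> K / (real n + 1) * 1 / real (Suc n)"
      using assms K0 by (intro divide_right_mono mult_mono cn) (auto simp: power_le_one)
    also have "\<dots> = K * inverse (real (Suc n) ^ 2)" by (simp add: power2_eq_square field_simps)
    finally show ?thesis .
  qed
  have geo: "summable (\<lambda>n. K * z^n)" using assms by (intro summable_mult summable_geometric) auto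
  have sU: "summable (\<lambda>n. norm (u n * w^n))"
    by (rule summable_comparison_test[OF _ geo])
       (use un K0 assms in \<open>auto intro!: exI[of _ 0] mult_right_mono simp: norm_mult norm_power nw\<close>)
  have sV: "summable (\<lambda>n. norm (of_nat n * cc M n * w^n))"
    by (rule summable_comparison_test[OF _ geo])
       (use vn K0 assms in \<open>auto intro!: exI[of _ 0] mult_right_mono simp: norm_mult norm_power nw\<close>)
  have sF: "summable (\<lambda>n. norm (cc M n * w^n))" using summable_cc[OF assms(1,2), of M] by (simp add: w_def)
  have sH2: "summable (\<lambda>n. K * inverse (real (Suc n) ^ 2))" by (intro summable_mult summable_inv_sq)
  have sH: "summable (\<lambda>n. norm (cc M n * w^n / of_nat (Suc n)))"
    by (rule summable_comparison_test[OF _ sH2]) (use hn in auto)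
  have sU': "summable (\<lambda>n. u n * w^n)" using sU by (rule summable_norm_cancel)
  have sV': "summable (\<lambda>n. of_nat n * cc M n * w^n)" using sV by (rule summable_norm_cancel)
  have sF': "summable (\<lambda>n. cc M n * w^n)" using sF by (rule summable_norm_cancel)
  have sH': "summable (\<lambda>n. cc M n * w^n / of_nat (Suc n))" using sH by (rule summable_norm_cancel)
  define F where "F = (\<Sum>n. cc M n * w^n)"
  define U where "U = (\<Sum>n. u n * w^n)"
  define V where "V = (\<Sum>n. of_nat n * cc M n * w^n)"
  define H where "H = (\<Sum>n. cc M n * w^n / of_nat (Suc n))"
  have VU: "V = w * U"
  proof -
    have "(\<Sum>n. of_nat (Suc n) * cc M (Suc n) * w^(Suc n)) = V - 0"
      using suminf_split_head[OF sV'] by (simp add: V_def del: of_nat_Suc)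
    moreover have "(\<lambda>n. of_nat (Suc n) * cc M (Suc n) * w^(Suc n)) = (\<lambda>n. w * (u n * w^n))"
      by (auto simp: u_def algebra_simps simp del: of_nat_Suc)
    ultimately have "V = (\<Sum>n. w * (u n * w^n))" by simp
    also have "\<dots> = w * U" unfolding U_def by (rule suminf_mult[OF sU'])
    finally show ?thesis .
  qed
  have "(2*a - 1) * F = (\<Sum>n. (2*a-1) * (cc M n * w^n))"
    unfolding F_def by (rule suminf_mult[OF sF', symmetric])
  also have "\<dots> = (\<Sum>n. (u n * w^n - of_nat n * cc M n * w^n) - (a-1)^2 * (cc M n * w^n / of_nat (Suc n)))"
  proof (rule suminf_cong)
    fix n
    have I: "(2*a-1) * cc M n = u n - of_nat n * cc M n - (a-1)^2 * (cc M n / of_nat (Suc n))"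
      using cc_identity[of M n] by (simp add: a_def u_def del: of_nat_Suc)
    have "(2*a-1) * (cc M n * w^n) = ((2*a-1) * cc M n) * w^n" by (simp only: mult.assoc)
    also have "\<dots> = (u n - of_nat n * cc M n - (a-1)^2 * (cc M n / of_nat (Suc n))) * w^n" by (simp only: I)
    also have "\<dots> = (u n * w^n - of_nat n * cc M n * w^n) - (a-1)^2 * (cc M n * w^n / of_nat (Suc n))"
      by (simp add: algebra_simps times_divide_eq_left times_divide_eq_right del: of_nat_Suc)
    finally show "(2*a-1) * (cc M n * w^n) = (u n * w^n - of_nat n * cc M n * w^n) - (a-1)^2 * (cc M n * w^n / of_nat (Suc n))"
      by (simp add: algebra_simps del: of_nat_Suc)
  qed
  also have "\<dots> = (U - V) - (a-1)^2 * H"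
  proof -
    have s1: "summable (\<lambda>n. u n * w^n - of_nat n * cc M n * w^n)" by (rule summable_diff[OF sU' sV'])
    have s2: "summable (\<lambda>n. (a-1)^2 * (cc M n * w^n / of_nat (Suc n)))" by (rule summable_mult[OF sH'])
    show ?thesis
      unfolding suminf_diff[OF s1 s2, symmetric] suminf_diff[OF sU' sV', symmetric] suminf_mult[OF sH', symmetric]
        U_def V_def H_def ..
  qed
  also have "\<dots> = (1 - w) * U - (a-1)^2 * H" by (simp add: VU algebra_simps)
  finally have eq: "(2*a - 1) * F = (1 - w) * U - (a-1)^2 * H" .
  have nU: "norm U \<le> K / (1 - z)"
  proof -
    have "norm U \<le> (\<Sum>n. norm (u n * w^n))" unfolding U_def by (rule summable_norm[OF sU])
    also have "\<dots> \<le> (\<Sum>n. K * z^n)"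
      by (rule suminf_le[OF _ sU geo]) (use un K0 assms in \<open>auto intro!: mult_right_mono simp: norm_mult norm_power nw\<close>)
    also have "\<dots> = K / (1 - z)"
      using assms suminf_geometric[of z] by (simp add: suminf_mult)
    finally show ?thesis .
  qed
  have nH: "norm H \<le> C2"
  proof -
    have "norm H \<le> (\<Sum>n. norm (cc M n * w^n / of_nat (Suc n)))" unfolding H_def by (rule summable_norm[OF sH])
    also have "\<dots> \<le> C2" unfolding C2_def by (rule suminf_le[OF hn sH sH2])
    finally show ?thesis .
  qed
  have n2a: "norm (2*a - 1) = 2*M" using assms by (simp add: a_def norm_mult)
  have "2*M * norm F = norm ((1 - w) * U - (a-1)^2 * H)" by (simp add: n2a eq[symmetric] norm_mult)
  also have "\<dots> \<le> norm ((1 - w) * U) + norm ((a-1)^2 * H)" by (rule norm_triangle_ineq4)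
  also have "\<dots> = (1 - z) * norm U + norm (a-1)^2 * norm H"
  proof -
    have "1 - w = complex_of_real (1 - z)" by (simp add: w_def)
    then have "norm (1 - w) = 1 - z" using assms by (simp del: of_real_diff)
    then show ?thesis by (simp add: norm_mult norm_power)
  qed
  also have "\<dots> \<le> (1 - z) * (K / (1 - z)) + norm (a-1)^2 * C2"
    using assms by (intro add_mono mult_left_mono nU nH) auto
  also have "\<dots> = K + norm (a-1)^2 * C2" using assms by simp
  finally have "2*M * norm F \<le> K + norm (a-1)^2 * C2" .
  then have "norm F \<le> (K + norm (a-1)^2 * C2) / (2*M)" using assms by (simp add: field_simps)
  then show ?thesis by (simp add: hyp_eq F_def K_def a_def C2_def w_def)
qed

lemma int_arcsin:
  fixes S D Q :: real
  assumes "S > 0" "0 \<le> D" "D < S"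
  shows "(LBINT r=0..D. Q / sqrt (S^2 - r^2)) = Q * arcsin (D / S)"
    and "interval_lebesgue_integrable lborel 0 D (\<lambda>r. Q / sqrt (S^2 - r^2))"
proof -
  have pos: "S^2 - r^2 > 0" if "0 \<le> r" "r \<le> D" for r
  proof -
    have "r^2 < S^2" using that assms by (intro power_strict_mono) auto
    then show ?thesis by simp
  qed
  have cont: "isCont (\<lambda>r. Q / sqrt (S^2 - r^2)) r" if "0 \<le> r" "r \<le> D" for r
    using pos[OF that] by (intro continuous_intros) auto
  show "interval_lebesgue_integrable lborel 0 D (\<lambda>r. Q / sqrt (S^2 - r^2))"
  proof -
    have "interval_lebesgue_integrable lborel (ereal 0) (ereal D) (\<lambda>r. Q / sqrt (S^2 - r^2))"
      by (rule interval_integrable_isCont) (use cont assms in auto)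
    then show ?thesis by (simp add: zero_ereal_def)
  qed
  have der: "((\<lambda>r. Q * arcsin (r / S)) has_vector_derivative (Q / sqrt (S^2 - r^2))) (at r within {min 0 D..max 0 D})"
    if "min 0 D \<le> r" "r \<le> max 0 D" for r
  proof -
    have r: "0 \<le> r" "r \<le> D" using that assms by auto
    have r1: "-1 < r / S" "r / S < 1" using r assms by (auto simp: field_simps)
    have "((\<lambda>r. Q * arcsin (r / S)) has_real_derivative (Q * (inverse (sqrt (1 - (r/S)^2)) * (1 / S)))) (at r)"
    proof (intro DERIV_cmult)
      have d: "((\<lambda>r. r / S) has_real_derivative (1 / S)) (at r)"
        using assms by (auto intro!: derivative_eq_intros)
      show "((\<lambda>r. arcsin (r / S)) has_real_derivative (inverse (sqrt (1 - (r/S)^2)) * (1 / S))) (at r)"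
        using DERIV_chain2[where f=arcsin and g="\<lambda>r. r / S" and x=r, OF DERIV_arcsin[OF r1] d] by simp
    qed
    moreover have "Q * (inverse (sqrt (1 - (r/S)^2)) * (1 / S)) = Q / sqrt (S^2 - r^2)"
    proof -
      have "S^2 - r^2 = S^2 * (1 - (r/S)^2)" using assms by (simp add: field_simps)
      then have "sqrt (S^2 - r^2) = S * sqrt (1 - (r/S)^2)" using assms by (simp add: real_sqrt_mult)
      then show ?thesis by (simp add: field_simps)
    qed
    ultimately show ?thesis
      by (simp add: has_real_derivative_iff_has_vector_derivative[symmetric] has_field_derivative_at_within)
  qed
  have "(LBINT r=ereal 0..ereal D. Q / sqrt (S^2 - r^2)) = Q * arcsin (D / S) - Q * arcsin (0 / S)"
    using assms by (intro interval_integral_FTC_finite der) (auto intro!: continuous_at_imp_continuous_on cont)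
  then show "(LBINT r=0..D. Q / sqrt (S^2 - r^2)) = Q * arcsin (D / S)" by (simp add: zero_ereal_def)
qed

definition Bbdd :: "real \<Rightarrow> real" where
  "Bbdd M = (exp (4*M^2) + norm ((1/2 + \<i> * complex_of_real M) - 1)^2 * (\<Sum>n. exp (4*M^2) * inverse (real (Suc n) ^ 2))) / (2*M)"

lemma phi_facts:
  assumes "l > 1" "1 \<le> b" "b \<le> t"
  shows "phi l t < 0" "phi l b \<le> phi l t"
proof -
  have "t powr (1 - l) > 0" using assms by simp
  then show "phi l t < 0" using assms by (simp add: phi_def divide_pos_neg)
  have "t powr (1 - l) \<le> b powr (1 - l)" using assms by (intro powr_mono2') auto
  then show "phi l b \<le> phi l t" using assms unfolding phi_def by (intro divide_right_mono_neg) auto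
qed

lemma kernel_bound:
  fixes l mc t b r :: real
  assumes l: "l > 1" and M0: "Mpar l mc \<ge> 0" and b: "1 \<le> b" "b \<le> t"
    and r: "0 < r" "r < phi l t - phi l b"
  shows "norm (Ekernel l mc r t b) \<le>
    2 * (l-1) powr (l/(1-l)) * (- phi l b) powr (1/(1-l)) *
    (if Mpar l mc > 0 then Bbdd (Mpar l mc) else exp (4 * (Mpar l mc)^2) * (1 + ln (phi l b / phi l t)))
    / sqrt ((phi l t + phi l b)^2 - r^2)"
proof -
  define M where "M = Mpar l mc"
  define a where "a = apar l mc"
  define pt where "pt = phi l t"
  define pb where "pb = phi l b"
  define X where "X = (pt + pb)^2 - r^2"
  define z where "z = ((pt - pb)^2 - r^2) / X"
  define FB where "FB = (if M > 0 then Bbdd M else exp (4 * M^2) * (1 + ln (pb / pt)))"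
  define L1 where "L1 = (l-1) powr (l/(1-l))"
  have a: "a = 1/2 + \<i> * complex_of_real M" by (simp add: a_def M_def apar_def)
  have pt0: "pt < 0" and pbt: "pb \<le> pt" using phi_facts[OF l b] by (auto simp: pt_def pb_def)
  have pb0: "pb < 0" using pt0 pbt by linarith
  have rD: "r < pt - pb" using r by (simp add: pt_def pb_def)
  have X0: "X > 0"
  proof -
    have "r < -(pt + pb)" using rD pt0 by linarith
    then have "r^2 < (-(pt + pb))^2" using r by (intro power_strict_mono) auto
    also have "(-(pt + pb))^2 = (pt + pb)^2" by (rule power2_minus)
    finally show ?thesis by (simp add: X_def)
  qed
  have z0: "0 \<le> z"
  proof -
    have "r^2 \<le> (pt - pb)^2" using r rD by (intro power_mono) auto
    then show ?thesis using X0 by (simp add: z_def)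
  qed
  have pp: "pt * pb > 0" using pt0 pb0 by (simp add: mult_neg_neg)
  have omz: "1 - z = 4 * pt * pb / X"
    using X0 by (simp add: z_def X_def field_simps power2_eq_square)
  have z1: "z < 1"
  proof -
    have "0 < 4 * pt * pb / X" using pp X0 by (simp add: mult.assoc)
    with omz show ?thesis by linarith
  qed
  have FB: "norm (hyp2F1 a a 1 (complex_of_real z)) \<le> FB"
  proof (cases "M > 0")
    case True
    then show ?thesis using F_bdd[OF z0 z1 True] by (simp add: FB_def a Bbdd_def)
  next
    case False
    have "norm (hyp2F1 a a 1 (complex_of_real z)) \<le> exp (4*M^2) * (1 - ln (1 - z))"
      using F_log_bound[OF z0 z1] by (simp add: a)
    also have "\<dots> \<le> exp (4*M^2) * (1 + ln (pb / pt))"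
    proof -
      have "X \<le> (pt + pb)^2" by (simp add: X_def)
      also have "\<dots> \<le> (2*pb)^2"
      proof -
        have "\<bar>pt+pb\<bar> \<le> \<bar>2*pb\<bar>" using pt0 pbt by auto
        then show ?thesis by (simp only: abs_le_square_iff)
      qed
      finally have "X \<le> 4 * pb^2" by simp
      then have "X / (4 * pt * pb) \<le> pb / pt"
        using pp pt0 pb0 by (simp add: divide_simps power2_eq_square)
      then have "ln (X / (4 * pt * pb)) \<le> ln (pb / pt)"
        using X0 pp by (intro ln_mono) (auto simp: mult.assoc)
      moreover have "ln (1 - z) = - ln (X / (4 * pt * pb))"
        using X0 pp by (simp add: omz ln_div mult.assoc)
      ultimately show ?thesis by (intro mult_left_mono) auto
    qed
    finally show ?thesis using False by (simp add: FB_def)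
  qed
  have E: "Ekernel l mc r t b = 2 powr (2*a) * complex_of_real (1-l) powr complex_of_real (l/(1-l))
      * complex_of_real pb powr (complex_of_real (l/(1-l)) + 2*a) * complex_of_real X powr (-a)
      * hyp2F1 a a 1 (complex_of_real z)"
    by (simp add: Ekernel_def Let_def a_def pt_def pb_def X_def z_def)
  have n1: "norm (2 powr (2*a)) = 2"
  proof -
    have "norm ((2::complex) powr (2*a)) = Re 2 powr Re (2*a)"
      by (rule norm_powr_real_powr) auto
    then show ?thesis by (simp add: a)
  qed
  have n2: "norm (complex_of_real (1-l) powr complex_of_real (l/(1-l))) = L1"
  proof -
    have "norm (complex_of_real (1-l) powr complex_of_real (l/(1-l))) = norm (complex_of_real (1-l)) powr Re (complex_of_real (l/(1-l)))"
      by (rule norm_powr_real_powr') auto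
    moreover have "norm (complex_of_real (1-l)) = l - 1" using l by (simp only: norm_of_real)
    ultimately show ?thesis by (simp only: L1_def Re_complex_of_real)
  qed
  have n3: "norm (complex_of_real pb powr (complex_of_real (l/(1-l)) + 2*a)) \<le> (- pb) powr (1/(1-l))"
  proof -
    have "norm (complex_of_real pb powr (complex_of_real (l/(1-l)) + 2*a))
        = norm (complex_of_real pb) powr Re (complex_of_real (l/(1-l)) + 2*a) * exp (- Im (complex_of_real (l/(1-l)) + 2*a) * Arg (complex_of_real pb))"
      by (rule norm_powr_complex)
    also have "\<dots> = (- pb) powr (1/(1-l)) * exp (- (2*M) * pi)"
    proof -
      have "l/(1-l) + 1 = 1/(1-l)" using l by (simp add: field_simps)
      then show ?thesis using pb0 by (simp add: a)
    qed
    also have "\<dots> \<le> (- pb) powr (1/(1-l)) * 1"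
      using M0 by (intro mult_left_mono) (auto simp: M_def)
    finally show ?thesis by simp
  qed
  have n4: "norm (complex_of_real X powr (-a)) = 1 / sqrt X"
  proof -
    have "norm (complex_of_real X powr (-a)) = Re (complex_of_real X) powr Re (-a)"
      using X0 by (intro norm_powr_real_powr) auto
    also have "\<dots> = X powr (- (1/2))" by (simp add: a)
    also have "\<dots> = 1 / sqrt X" using X0 by (simp add: powr_minus_divide powr_half_sqrt)
    finally show ?thesis .
  qed
  have L10: "L1 \<ge> 0" by (simp add: L1_def)
  have FB0: "FB \<ge> 0" using FB norm_ge_zero order_trans by blast
  have "norm (Ekernel l mc r t b) = 2 * L1 * norm (complex_of_real pb powr (complex_of_real (l/(1-l)) + 2*a))
        * (1 / sqrt X) * norm (hyp2F1 a a 1 (complex_of_real z))"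
    unfolding E norm_mult n1 n2 n4 ..
  also have "\<dots> \<le> 2 * L1 * (- pb) powr (1/(1-l)) * (1 / sqrt X) * FB"
    using L10 X0 by (intro mult_mono n3 FB mult_nonneg_nonneg) auto
  finally show ?thesis unfolding FB_def M_def pt_def pb_def X_def L1_def by simp
qed

lemma Bbdd_nonneg: "M > 0 \<Longrightarrow> Bbdd M \<ge> 0"
  unfolding Bbdd_def
  by (intro divide_nonneg_pos add_nonneg_nonneg mult_nonneg_nonneg suminf_nonneg summable_mult summable_inv_sq) auto

theorem lemma3p3:
  fixes l mc :: real
  assumes "l > 1" and "4 * mc\<^sup>2 \<ge> (3 * l - 1)\<^sup>2"
  shows "\<exists>C::real. \<forall>t b. 1 \<le> t \<longrightarrow> 1 \<le> b \<longrightarrow> b \<le> t \<longrightarrow>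
           (LBINT r=0..(phi l t - phi l b). norm (Ekernel l mc r t b))
             \<le> C * \<bar>phi l b\<bar> powr (1 / (1 - l))
                 * (1 + ln (phi l b / phi l t)) powr (1 - sgn (Mpar l mc))"
proof -
  define M where "M = Mpar l mc"
  have M0: "M \<ge> 0"
  proof -
    have "(1 - 3*l)^2 = (3*l - 1)^2" by (simp add: power2_commute)
    then have "4 * mc^2 - (1 - 3*l)^2 \<ge> 0" using assms(2) by simp
    then show ?thesis using assms(1) by (simp add: M_def Mpar_def)
  qed
  define L1 where "L1 = (l-1) powr (l/(1-l))"
  define K where "K = exp (4 * M^2)"
  define B0 where "B0 = (if M > 0 then Bbdd M else K)"
  define C where "C = pi * L1 * B0"
  have L10: "L1 \<ge> 0" by (simp add: L1_def)
  have B00: "B0 \<ge> 0" by (simp add: B0_def K_def Bbdd_nonneg)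
  show ?thesis
  proof (intro exI[of _ C] allI impI)
    fix t b :: real
    assume t: "1 \<le> t" and b: "1 \<le> b" "b \<le> t"
    define pt where "pt = phi l t"
    define pb where "pb = phi l b"
    define D where "D = pt - pb"
    define S where "S = -(pt + pb)"
    have pt0: "pt < 0" and pbt: "pb \<le> pt" using phi_facts[OF assms(1) b] by (auto simp: pt_def pb_def)
    have pb0: "pb < 0" using pt0 pbt by linarith
    have D0: "0 \<le> D" using pbt by (simp add: D_def)
    have S0: "S > 0" using pt0 pb0 by (simp add: S_def)
    have DS: "D < S" using pt0 by (simp add: D_def S_def)
    have rho: "1 \<le> pb / pt" using pbt pt0 by (simp add: le_divide_eq)
    have lnrho: "ln (pb / pt) \<ge> 0" using rho by simp
    define FB where "FB = (if M > 0 then Bbdd M else K * (1 + ln (pb / pt)))"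
    have FB0: "FB \<ge> 0" using lnrho by (simp add: FB_def K_def Bbdd_nonneg)
    define Q where "Q = 2 * L1 * (- pb) powr (1/(1-l)) * FB"
    have Q0: "Q \<ge> 0" using L10 FB0 by (simp add: Q_def)
    define g where "g r = Q / sqrt (S^2 - r^2)" for r
    define f where "f r = norm (Ekernel l mc r t b)" for r
    have fg: "f r \<le> g r" if "r \<in> {0<..<D}" for r
    proof -
      have r: "0 < r" "r < phi l t - phi l b" using that by (auto simp: D_def pt_def pb_def)
      have "f r \<le> Q / sqrt ((pt + pb)^2 - r^2)"
        unfolding f_def Q_def FB_def M_def L1_def K_def pt_def pb_def
        by (rule kernel_bound[OF assms(1) _ b r]) (use M0 in \<open>simp add: M_def\<close>)
      moreover have "S^2 = (pt + pb)^2" unfolding S_def by (rule power2_minus)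
      ultimately show ?thesis by (simp add: g_def)
    qed
    have gfun: "g = (\<lambda>r. Q / sqrt (S^2 - r^2))" by (rule ext) (simp add: g_def)
    have gint: "set_integrable lborel {0<..<D} g"
      using int_arcsin(2)[OF S0 D0 DS, of Q] D0
      by (simp add: gfun interval_lebesgue_integrable_def zero_ereal_def)
    have gval: "(LINT r:{0<..<D}|lborel. g r) = Q * arcsin (D / S)"
      using int_arcsin(1)[OF S0 D0 DS, of Q] D0
      by (simp add: gfun interval_lebesgue_integral_le_eq zero_ereal_def)
    have "(LBINT r=0..D. f r) = (LINT r:{0<..<D}|lborel. f r)"
      using D0 by (simp add: interval_lebesgue_integral_le_eq zero_ereal_def)
    also have "\<dots> \<le> Q * (pi / 2)"
    proof (cases "set_integrable lborel {0<..<D} f")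
      case True
      have "(LINT r:{0<..<D}|lborel. f r) \<le> (LINT r:{0<..<D}|lborel. g r)"
        by (rule set_integral_mono[OF True gint fg])
      also have "\<dots> = Q * arcsin (D / S)" by (rule gval)
      also have "\<dots> \<le> Q * (pi / 2)"
        using Q0 S0 D0 DS by (intro mult_left_mono arcsin_ubound) (auto simp: field_simps)
      finally show ?thesis .
    next
      case False
      then have "(LINT r:{0<..<D}|lborel. f r) = 0"
        unfolding set_integrable_def set_lebesgue_integral_def by (rule not_integrable_integral_eq)
      then show ?thesis using Q0 by simp
    qed
    also have "\<dots> = C * \<bar>pb\<bar> powr (1 / (1 - l)) * (1 + ln (pb / pt)) powr (1 - sgn M)"
    proof (cases "M > 0")
      case True
      then show ?thesis using pb0 lnrho
        by (simp add: Q_def C_def FB_def B0_def)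
    next
      case False
      then have "M = 0" using M0 by simp
      then show ?thesis using pb0 lnrho
        by (simp add: Q_def C_def FB_def B0_def powr_one)
    qed
    finally show "(LBINT r=0..(phi l t - phi l b). norm (Ekernel l mc r t b))
             \<le> C * \<bar>phi l b\<bar> powr (1 / (1 - l)) * (1 + ln (phi l b / phi l t)) powr (1 - sgn (Mpar l mc))"
      by (simp add: f_def D_def pt_def pb_def M_def)
  qed
qed

end
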